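(* Let $\mathcal J$ be an $n\times n$ signed symbolic matrix with negative diagonal entries, and let $G$ be its J-graph. Fix nodes $i\neq j$, designating $i$ as input and $j$ as output, and let $\mathcal J[\hat i,\hat j]$ denote the minor obtained by deleting row $i$ and column $j$. Then: (1) $\mathcal J[\hat i,\hat j]$ is identically zero if and only if $G$ has no path from $i$ to $j$. (2) Suppose $G$ has a path from $i$ to $j$. Then $\mathcal J[\hat i,\hat j]$ has mixed signs if and only if either $G$ has an incoherent feedforward loop from $i$ to $j$, or $G$ has a positive feedback loop and a path from $i$ to $j$ that are vertex-disjoint.
   Context: A signed symbolic matrix is a matrix whose $(k,l)$ entry is either $a_{kl}$, $-a_{kl}$, or $0$, where the $a_{kl}$ are distinct variables; "negative diagonal" means the $(k,k)$ entry is $-a_{kk}$ for every $k$. A polynomial in the $a_{kl}$ has mixed signs if, after all cancellations, it has at least one monomial with positive coefficient and at least one with negative coefficient. The J-graph $G$ of $\mathcal J$ is the signed directed graph on nodes $1,\ldots,n$ with a positive (resp. negative) edge from $k$ to $l$ iff the $(l,k)$ entry of $\mathcal J$ is $a_{lk}$ (resp. $-a_{lk}$), and no edge otherwise. A path is a walk with no repeated vertices except possibly first = last, in which case it is a cycle; the sign of a set of edges is the product of their signs. A feedback loop is a cycle of length at least two; it is positive if its sign is positive. A feedforward loop from $i$ to $j$ ($j\ne i$) is a pair of distinct paths $P_1\neq P_2$ both starting at $i$ and ending at $j$; it is incoherent if $P_1$ and $P_2$ have opposite signs. *)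

theory Defs
  imports "HOL-Library.Poly_Mapping" "Jordan_Normal_Form.Determinant"
begin

text \<open>Multivariate integer polynomials in the variables a_kl, indexed by pairs (k,l):
  a monomial is a finitely supported exponent map, a polynomial a finitely supported
  coefficient map on monomials (convolution product).\<close>

type_synonym monom = "(nat \<times> nat) \<Rightarrow>\<^sub>0 nat"
type_synonym ipoly = "monom \<Rightarrow>\<^sub>0 int"

definition var :: "nat \<Rightarrow> nat \<Rightarrow> ipoly" where
  "var k l = Poly_Mapping.single (Poly_Mapping.single (k, l) 1) 1"

text \<open>Sign pattern s: s k l in {-1,0,1}; entry (k,l) of the symbolic matrix is s k l * a_kl.
  Nodes are 0..n-1.\<close>

definition sign_pattern :: "nat \<Rightarrow> (nat \<Rightarrow> nat \<Rightarrow> int) \<Rightarrow> bool" where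
  "sign_pattern n s \<longleftrightarrow> (\<forall>k<n. \<forall>l<n. s k l \<in> {-1, 0, 1})"

definition neg_diag :: "nat \<Rightarrow> (nat \<Rightarrow> nat \<Rightarrow> int) \<Rightarrow> bool" where
  "neg_diag n s \<longleftrightarrow> (\<forall>k<n. s k k = -1)"

definition sym_mat :: "nat \<Rightarrow> (nat \<Rightarrow> nat \<Rightarrow> int) \<Rightarrow> ipoly mat" where
  "sym_mat n s = mat n n (\<lambda>(k, l). of_int (s k l) * var k l)"

text \<open>J-graph: edge k -> l iff entry (l,k) is nonzero; its sign is s l k.\<close>

definition edge :: "(nat \<Rightarrow> nat \<Rightarrow> int) \<Rightarrow> nat \<Rightarrow> nat \<Rightarrow> bool" where
  "edge s k l \<longleftrightarrow> s l k \<noteq> 0"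

definition is_path_from :: "nat \<Rightarrow> (nat \<Rightarrow> nat \<Rightarrow> int) \<Rightarrow> nat \<Rightarrow> nat \<Rightarrow> nat list \<Rightarrow> bool" where
  "is_path_from n s i j vs \<longleftrightarrow>
     vs \<noteq> [] \<and> hd vs = i \<and> last vs = j \<and> distinct vs \<and> set vs \<subseteq> {..<n} \<and>
     (\<forall>t. Suc t < length vs \<longrightarrow> edge s (vs ! t) (vs ! Suc t))"

definition path_sign :: "(nat \<Rightarrow> nat \<Rightarrow> int) \<Rightarrow> nat list \<Rightarrow> int" where
  "path_sign s vs = (\<Prod>t < length vs - 1. s (vs ! Suc t) (vs ! t))"

definition is_feedback_loop :: "nat \<Rightarrow> (nat \<Rightarrow> nat \<Rightarrow> int) \<Rightarrow> nat list \<Rightarrow> bool" where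
  "is_feedback_loop n s vs \<longleftrightarrow>
     length vs \<ge> 2 \<and> distinct vs \<and> set vs \<subseteq> {..<n} \<and>
     (\<forall>t < length vs. edge s (vs ! t) (vs ! ((Suc t) mod length vs)))"

definition cycle_sign :: "(nat \<Rightarrow> nat \<Rightarrow> int) \<Rightarrow> nat list \<Rightarrow> int" where
  "cycle_sign s vs = (\<Prod>t < length vs. s (vs ! ((Suc t) mod length vs)) (vs ! t))"

definition incoherent_ffl :: "nat \<Rightarrow> (nat \<Rightarrow> nat \<Rightarrow> int) \<Rightarrow> nat \<Rightarrow> nat \<Rightarrow> bool" where
  "incoherent_ffl n s i j \<longleftrightarrow>
     (\<exists>P1 P2. is_path_from n s i j P1 \<and> is_path_from n s i j P2 \<and> P1 \<noteq> P2 \<and>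
              path_sign s P1 = - path_sign s P2)"

definition mixed_signs :: "ipoly \<Rightarrow> bool" where
  "mixed_signs p \<longleftrightarrow> (\<exists>m. Poly_Mapping.lookup p m > 0) \<and> (\<exists>m. Poly_Mapping.lookup p m < 0)"

end

theory Submission
  imports Defs "HOL-Combinatorics.Cycles"
begin


definition mnm :: "nat \<Rightarrow> nat \<Rightarrow> (nat \<Rightarrow> nat) \<Rightarrow> monom" where
 "mnm n j p = (\<Sum>k\<in>{0..<n}-{j}. Poly_Mapping.single (p k, k) 1)"
definition cf :: "nat \<Rightarrow> (nat\<Rightarrow>nat\<Rightarrow>int) \<Rightarrow> nat \<Rightarrow> (nat\<Rightarrow>nat) \<Rightarrow> int" where
 "cf n s j p = sign p * (\<Prod>k\<in>{0..<n}-{j}. s (p k) k)"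

lemma prod_sv: "finite K \<Longrightarrow> (\<Prod>k\<in>K. (of_int (f k) * var (g k) k :: ipoly)) =
   Poly_Mapping.single (\<Sum>k\<in>K. Poly_Mapping.single (g k, k) 1) (\<Prod>k\<in>K. f k)"
proof (induction K rule: finite_induct)
  case empty then show ?case by simp
next
  case (insert x F)
  have "(of_int (f x) * var (g x) x :: ipoly) = Poly_Mapping.single (Poly_Mapping.single (g x, x) 1) (f x)"
    by (simp add: var_def mult_single flip: single_of_int)
  then show ?case using insert by (simp add: mult_single)
qed

lemma det_B:
  fixes s :: "nat \<Rightarrow> nat \<Rightarrow> int"
  assumes "i < n" "j < n"
  defines "B \<equiv> mat n n (\<lambda>(k,l). if k = i then (if l = j then 1 else 0) else (sym_mat n s) $$ (k,l))"
  shows "det (mat_delete (sym_mat n s) i j) = (-1)^(i+j) * det B"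
    and "det B = (\<Sum>p\<in>{p. p permutes {0..<n} \<and> p j = i}. Poly_Mapping.single (mnm n j p) (cf n s j p))"
proof -
  have Bc: "B \<in> carrier_mat n n" unfolding B_def by simp
  have "det B = (\<Sum>l<n. B $$ (i,l) * cofactor B i l)"
    by (rule laplace_expansion_row[OF Bc assms(1)])
  also have "\<dots> = (\<Sum>l<n. if l = j then cofactor B i l else 0)"
    by (rule sum.cong) (auto simp: B_def assms)
  also have "\<dots> = cofactor B i j" using assms by simp
  finally have dB: "det B = cofactor B i j" .
  have md: "mat_delete B i j = mat_delete (sym_mat n s) i j"
    by (rule eq_matI) (auto simp: mat_delete_def B_def sym_mat_def)
  from dB md have "det B = (-1)^(i+j) * det (mat_delete (sym_mat n s) i j)"
    unfolding cofactor_def by simp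
  then have "(-1)^(i+j) * det B = ((-1)^(i+j) * (-1)^(i+j)) * det (mat_delete (sym_mat n s) i j)"
    by (simp add: mult.assoc)
  also have "(-1)^(i+j) * (-1)^(i+j) = (1::ipoly)"
    by (simp flip: power_mult_distrib) 
  finally show "det (mat_delete (sym_mat n s) i j) = (-1)^(i+j) * det B" by simp
next
  have Bc: "B \<in> carrier_mat n n" unfolding B_def by simp
  let ?V = "{0..<n}"
  have "det B = (\<Sum> p | p permutes ?V. signof p * (\<Prod>k<n. B $$ (p k, k)))"
    by (rule det_col[OF Bc])
  also have "\<dots> = (\<Sum>p\<in>{p. p permutes ?V \<and> p j = i}. signof p * (\<Prod>k<n. B $$ (p k, k)))"
  proof (rule sum.mono_neutral_cong_right)
    show "finite {p. p permutes ?V}" by (simp add: finite_permutations)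
    show "{p. p permutes ?V \<and> p j = i} \<subseteq> {p. p permutes ?V}" by auto
    show "\<forall>p\<in>{p. p permutes ?V} - {p. p permutes ?V \<and> p j = i}. signof p * (\<Prod>k<n. B $$ (p k, k)) = (0::ipoly)"
    proof
      fix p assume p: "p \<in> {p. p permutes ?V} - {p. p permutes ?V \<and> p j = i}"
      then have pp: "p permutes ?V" and pj: "p j \<noteq> i" by auto
      have "i \<in> p ` ?V" using permutes_image[OF pp] assms by auto
      then obtain k where k: "k < n" "p k = i" by auto
      have "k \<noteq> j" using k pj by auto
      then have "B $$ (p k, k) = 0" using k assms by (simp add: B_def)
      then have "(\<Prod>k<n. B $$ (p k, k)) = 0" using k by (intro prod_zero) auto
      then show "signof p * (\<Prod>k<n. B $$ (p k, k)) = (0::ipoly)" by simp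
    qed
  qed auto
  also have "\<dots> = (\<Sum>p\<in>{p. p permutes ?V \<and> p j = i}. Poly_Mapping.single (mnm n j p) (cf n s j p))"
  proof (rule sum.cong[OF refl])
    fix p assume "p \<in> {p. p permutes ?V \<and> p j = i}"
    then have pp: "p permutes ?V" and pj: "p j = i" by auto
    have eqV: "{..<n} = insert j (?V - {j})" using assms by auto
    have "(\<Prod>k<n. B $$ (p k, k)) = (\<Prod>k\<in>insert j (?V - {j}). B $$ (p k, k))"
      by (simp only: eqV)
    also have "\<dots> = B $$ (p j, j) * (\<Prod>k\<in>?V-{j}. B $$ (p k, k))"
      by (rule prod.insert) auto
    also have "B $$ (p j, j) = 1" using pj assms by (simp add: B_def)
    also have "(\<Prod>k\<in>?V-{j}. B $$ (p k, k)) = (\<Prod>k\<in>?V-{j}. (of_int (s (p k) k) * var (p k) k :: ipoly))"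
    proof (rule prod.cong[OF refl])
      fix k assume k: "k \<in> ?V - {j}"
      have "p k \<noteq> i" using k pj permutes_inj[OF pp] by (metis DiffE inj_eq singletonI)
      moreover have "p k < n" using k permutes_in_image[OF pp] by auto
      ultimately show "B $$ (p k, k) = of_int (s (p k) k) * var (p k) k"
        using k by (simp add: B_def sym_mat_def)
    qed
    also have "\<dots> = Poly_Mapping.single (mnm n j p) (\<Prod>k\<in>?V-{j}. s (p k) k)"
      unfolding mnm_def by (rule prod_sv) simp
    finally show "signof p * (\<Prod>k<n. B $$ (p k, k)) = Poly_Mapping.single (mnm n j p) (cf n s j p)"
      by (simp add: cf_def mult_single flip: single_of_int)
  qed
  finally show "det B = (\<Sum>p\<in>{p. p permutes {0..<n} \<and> p j = i}. Poly_Mapping.single (mnm n j p) (cf n s j p))" .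
qed


lemma lookup_mnm: "Poly_Mapping.lookup (mnm n j p) (a,b) = (if b \<in> {0..<n}-{j} \<and> a = p b then 1 else 0)"
proof -
  have "Poly_Mapping.lookup (mnm n j p) (a,b) = (\<Sum>k\<in>{0..<n}-{j}. if k = b then (if a = p b then 1 else 0) else 0)"
    unfolding mnm_def lookup_sum lookup_single by (rule sum.cong) (auto simp: when_def)
  also have "\<dots> = (if b \<in> {0..<n}-{j} \<and> a = p b then 1 else 0)"
    using sum.delta[of "{0..<n}-{j}" b "\<lambda>_. if a = p b then 1 else (0::nat)"] by auto
  finally show ?thesis .
qed

lemma mnm_inj:
  assumes "p permutes {0..<n}" "p' permutes {0..<n}" "p j = p' j" "mnm n j p = mnm n j p'"
  shows "p = p'"
proof
  fix b
  show "p b = p' b"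
  proof (cases "b \<in> {0..<n}-{j}")
    case True
    have "Poly_Mapping.lookup (mnm n j p) (p b, b) = 1" using True by (simp add: lookup_mnm)
    then have "Poly_Mapping.lookup (mnm n j p') (p b, b) = 1" using assms(4) by simp
    then show ?thesis by (simp add: lookup_mnm split: if_splits)
  next
    case False
    then show ?thesis using assms permutes_not_in by (metis Diff_iff singletonD)
  qed
qed

lemma lookup_Q:
  assumes "finite S"
  shows "Poly_Mapping.lookup (\<Sum>p\<in>S. Poly_Mapping.single (mnm n j p) (cf n s j p)) m
     = (\<Sum>p\<in>S. if mnm n j p = m then cf n s j p else 0)"
  unfolding lookup_sum lookup_single by (rule sum.cong) (auto simp: when_def)

lemma Q_at:
  assumes "S = {p. p permutes {0..<n} \<and> p j = i}" "p0 \<in> S"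
  shows "Poly_Mapping.lookup (\<Sum>p\<in>S. Poly_Mapping.single (mnm n j p) (cf n s j p)) (mnm n j p0) = cf n s j p0"
proof -
  have fin: "finite S" using assms(1) finite_permutations[of "{0..<n}"] by (auto intro: finite_subset)
  have "(\<Sum>p\<in>S. if mnm n j p = mnm n j p0 then cf n s j p else 0) = (\<Sum>p\<in>S. if p = p0 then cf n s j p else 0)"
  proof (rule sum.cong[OF refl])
    fix p assume "p \<in> S"
    then have "mnm n j p = mnm n j p0 \<longleftrightarrow> p = p0" using assms mnm_inj[of p n p0 j] by auto
    then show "(if mnm n j p = mnm n j p0 then cf n s j p else 0) = (if p = p0 then cf n s j p else 0)" by simp
  qed
  also have "\<dots> = cf n s j p0" using fin assms(2) by (simp add: sum.delta')
  finally show ?thesis using lookup_Q[OF fin] by simp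
qed

lemma Q_vals:
  assumes "finite S" "Poly_Mapping.lookup (\<Sum>p\<in>S. Poly_Mapping.single (mnm n j p) (cf n s j p)) m \<noteq> 0"
  shows "\<exists>p\<in>S. mnm n j p = m"
proof (rule ccontr)
  assume "\<not> ?thesis"
  then have "(\<Sum>p\<in>S. if mnm n j p = m then cf n s j p else 0) = 0" by (intro sum.neutral) auto
  then show False using assms lookup_Q[OF assms(1)] by simp
qed

lemma Q_char:
  fixes s :: "nat \<Rightarrow> nat \<Rightarrow> int"
  assumes "S = {p. p permutes {0..<n} \<and> p j = i}"
  defines "Q \<equiv> (\<Sum>p\<in>S. Poly_Mapping.single (mnm n j p) (cf n s j p))"
  shows "Q = 0 \<longleftrightarrow> (\<forall>p\<in>S. cf n s j p = 0)"
    and "mixed_signs Q \<longleftrightarrow> (\<exists>p\<in>S. cf n s j p > 0) \<and> (\<exists>p\<in>S. cf n s j p < 0)"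
proof -
  have fin: "finite S" using assms(1) finite_permutations[of "{0..<n}"] by (auto intro: finite_subset)
  have vals: "\<exists>p\<in>S. Poly_Mapping.lookup Q m = cf n s j p" if nz: "Poly_Mapping.lookup Q m \<noteq> 0" for m
  proof -
    obtain p where "p \<in> S" "mnm n j p = m" using Q_vals[OF fin, of n j s m] nz unfolding Q_def by blast
    then show ?thesis using Q_at[OF assms(1), of p s] unfolding Q_def by metis
  qed
  have at: "Poly_Mapping.lookup Q (mnm n j p) = cf n s j p" if "p \<in> S" for p
    using Q_at[OF assms(1) that] unfolding Q_def by simp
  show "Q = 0 \<longleftrightarrow> (\<forall>p\<in>S. cf n s j p = 0)"
  proof
    assume "Q = 0" then show "\<forall>p\<in>S. cf n s j p = 0" using at by (metis lookup_zero)
  next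
    assume "\<forall>p\<in>S. cf n s j p = 0"
    then show "Q = 0" unfolding Q_def by simp
  qed
  show "mixed_signs Q \<longleftrightarrow> (\<exists>p\<in>S. cf n s j p > 0) \<and> (\<exists>p\<in>S. cf n s j p < 0)"
    unfolding mixed_signs_def
    by (metis at vals less_irrefl)
qed

lemma neg_pow_Q:
  fixes Q :: ipoly
  shows "((-1)^k * Q = 0 \<longleftrightarrow> Q = 0) \<and> (mixed_signs ((-1)^k * Q) \<longleftrightarrow> mixed_signs Q)"
proof (cases "even k")
  case True then show ?thesis by simp
next
  case False
  then have "(-1)^k * Q = - Q" by simp
  moreover have "mixed_signs (- Q) \<longleftrightarrow> mixed_signs Q"
    unfolding mixed_signs_def by (auto simp: lookup_uminus)
  ultimately show ?thesis by simp
qed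



lemma sign_cycle: "distinct cs \<Longrightarrow> sign (cycle_of_list cs) = (-1)^(length cs - 1)"
proof (induction cs rule: cycle_of_list.induct)
  case (1 i j cs)
  have "sign (cycle_of_list (i # j # cs)) = sign (transpose i j) * sign (cycle_of_list (j # cs))"
    by (simp add: sign_compose permutation_swap_id permutation_of_cycle)
  also have "\<dots> = - ((-1)^(length cs))" using 1 by (simp add: sign_swap_id)
  finally show ?case by (simp add: comp_def)
qed simp_all

lemma cyc_nth:
  assumes "distinct cs" "t < length cs"
  shows "cycle_of_list cs (cs!t) = cs!(Suc t mod length cs)"
proof -
  have "map (cycle_of_list cs) cs = rotate1 cs"
    using cyclic_rotation[OF assms(1), of 1] by simp
  then have "cycle_of_list cs (cs!t) = rotate1 cs ! t" using assms(2) by (metis nth_map)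
  then show ?thesis using nth_rotate1[OF assms(2)] by simp
qed

lemma prod_cyc:
  assumes "distinct cs" "\<forall>t<length cs. g (cs!t) = cs!(Suc t mod length cs)"
  shows "(\<Prod>k\<in>set cs. s (g k) k) = cycle_sign s cs"
proof -
  have "set cs = (nth cs) ` {..<length cs}" by (auto simp: in_set_conv_nth)
  moreover have "inj_on (nth cs) {..<length cs}" using assms(1) by (intro inj_on_nth) auto
  ultimately have "(\<Prod>k\<in>set cs. s (g k) k) = (\<Prod>t<length cs. s (g (cs!t)) (cs!t))"
    by (simp add: prod.reindex)
  also have "\<dots> = (\<Prod>t<length cs. s (cs!(Suc t mod length cs)) (cs!t))"
    using assms(2) by (intro prod.cong) auto
  finally show ?thesis unfolding cycle_sign_def .
qed

lemma prod_path:
  assumes "distinct cs" "cs \<noteq> []" "\<forall>t. Suc t < length cs \<longrightarrow> g (cs!t) = cs!(Suc t)"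
  shows "(\<Prod>k\<in>set cs - {last cs}. s (g k) k) = path_sign s cs"
proof -
  have l: "last cs = cs!(length cs - 1)" using assms(2) by (simp add: last_conv_nth)
  have "set cs - {last cs} = (nth cs) ` {..<length cs - 1}"
  proof
    show "set cs - {last cs} \<subseteq> (nth cs) ` {..<length cs - 1}"
    proof
      fix x assume "x \<in> set cs - {last cs}"
      then obtain t where t: "t < length cs" "x = cs!t" "x \<noteq> last cs" by (auto simp: in_set_conv_nth)
      then have "t \<noteq> length cs - 1" using l by auto
      then show "x \<in> (nth cs) ` {..<length cs - 1}" using t by auto
    qed
    show "(nth cs) ` {..<length cs - 1} \<subseteq> set cs - {last cs}"
    proof
      fix x assume "x \<in> (nth cs) ` {..<length cs - 1}"
      then obtain t where t: "t < length cs - 1" "x = cs!t" by auto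
      have "cs!t \<noteq> cs!(length cs - 1)" using t assms(1) by (simp add: nth_eq_iff_index_eq)
      then show "x \<in> set cs - {last cs}" using t l by auto
    qed
  qed
  moreover have "inj_on (nth cs) {..<length cs - 1}" using assms(1) by (intro inj_on_nth) auto
  ultimately have "(\<Prod>k\<in>set cs - {last cs}. s (g k) k) = (\<Prod>t<length cs - 1. s (g (cs!t)) (cs!t))"
    by (simp add: prod.reindex)
  also have "\<dots> = (\<Prod>t<length cs - 1. s (cs!(Suc t)) (cs!t))"
    using assms(3) by (intro prod.cong) auto
  finally show ?thesis unfolding path_sign_def .
qed

lemma prod_pm1: "finite A \<Longrightarrow> (\<forall>x\<in>A. f x \<in> {-1, 1::int}) \<Longrightarrow> prod f A \<in> {-1, 1}"
  by (induction A rule: finite_induct) auto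

lemma support_props:
  fixes p :: "'a \<Rightarrow> 'a" and a :: 'a
  assumes "permutation p"
  defines "cs \<equiv> support p a"
  shows "distinct cs" "cs \<noteq> []" "hd cs = a" "\<forall>t<length cs. p (cs!t) = cs!(Suc t mod length cs)"
    "\<forall>t<length cs. cs!t = (p ^^ t) a"
proof -
  show d: "distinct cs" unfolding cs_def by (rule cycle_of_permutation[OF assms(1)])
  have lp: "least_power p a > 0" using least_power_of_permutation(2)[OF assms(1)] .
  then show "cs \<noteq> []" unfolding cs_def by simp
  show "hd cs = a" unfolding cs_def using lp by (simp add: hd_map)
  show "\<forall>t<length cs. cs!t = (p ^^ t) a" unfolding cs_def by simp
  show "\<forall>t<length cs. p (cs!t) = cs!(Suc t mod length cs)"
  proof (intro allI impI)
    fix t assume t: "t < length cs"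
    have "cs!t \<in> set cs" using t by simp
    then have "p (cs!t) = cycle_of_list cs (cs!t)" unfolding cs_def by (rule cycle_restrict[OF assms(1)])
    then show "p (cs!t) = cs!(Suc t mod length cs)" using cyc_nth[OF d t] by simp
  qed
qed

lemma support_subset:
  assumes "p permutes S" "a \<in> S"
  shows "set (support p a) \<subseteq> S"
  using permutes_in_image[OF permutes_funpow[OF assms(1)]] assms(2) by auto

lemma decomp:
  fixes p :: "'a \<Rightarrow> 'a" and a :: 'a
  assumes "p permutes U" "finite U" "a \<in> U"
  defines "cs \<equiv> support p a"
  defines "q \<equiv> (\<lambda>y. if y \<in> U - set cs then p y else y)"
  shows "q permutes (U - set cs)" "p = cycle_of_list cs \<circ> q"
proof -
  show "q permutes (U - set cs)" unfolding q_def cs_def by (rule semidecomposition[OF assms(1,2)])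
  have is_permutation: "permutation p"
    using assms unfolding permutation_permutes by blast
  show "p = cycle_of_list cs \<circ> q"
  proof
    fix x
    consider "x \<in> U - set cs" | "x \<in> set cs" | "x \<notin> U" "x \<notin> set cs"
      by blast
    thus "p x = (cycle_of_list cs \<circ> q) x"
    proof cases
      case 1
      have "(p ^^ 1) x \<in> set (support p x)"
        unfolding support_set[OF is_permutation] by blast
      with 1 have "p x \<notin> set cs"
        using disjoint_support'[OF is_permutation, of x a] unfolding cs_def by auto
      with 1 show ?thesis
        using id_outside_supp[of _ cs] unfolding q_def by simp
    next
      case 2 thus ?thesis
        using cycle_restrict[OF is_permutation] unfolding q_def cs_def by simp
    next
      case 3 thus ?thesis
        using id_outside_supp[OF 3(2)] assms(1) permutes_not_in unfolding q_def by fastforce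
    qed
  qed
qed



lemma W:
  fixes s :: "nat \<Rightarrow> nat \<Rightarrow> int" and q :: "nat \<Rightarrow> nat"
  assumes sp: "sign_pattern n s" and nd: "neg_diag n s"
  shows "U \<subseteq> {..<n} \<Longrightarrow> q permutes U \<Longrightarrow> (\<forall>k\<in>U. s (q k) k \<noteq> 0) \<Longrightarrow>
    (\<forall>C. is_feedback_loop n s C \<and> set C \<subseteq> U \<longrightarrow> cycle_sign s C \<noteq> 1) \<Longrightarrow>
    sign q * (\<Prod>k\<in>U. s (q k) k) = (-1)^(card U)"
proof (induction "card U" arbitrary: U q rule: less_induct)
  case less
  have finU: "finite U" using less.prems(1) finite_subset by blast
  show ?case
  proof (cases "U = {}")
    case True then show ?thesis using less.prems(2) by simp
  next
    case False
    then obtain a where a: "a \<in> U" by blast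
    define cs where "cs = support q a"
    define q' where "q' = (\<lambda>y. if y \<in> U - set cs then q y else y)"
    have perm: "permutation q" using less.prems(2) finU permutation_permutes by blast
    have q'p: "q' permutes (U - set cs)" and qd: "q = cycle_of_list cs \<circ> q'"
      using decomp[OF less.prems(2) finU a] unfolding cs_def q'_def by auto
    note sp' = support_props[OF perm, of a, folded cs_def]
    have csU: "set cs \<subseteq> U" unfolding cs_def by (rule support_subset[OF less.prems(2) a])
    have a_cs: "a \<in> set cs" using sp'(2,3) by (metis hd_in_set)
    have card_lt: "card (U - set cs) < card U" using finU a a_cs by (intro psubset_card_mono) auto
    have IH: "sign q' * (\<Prod>k\<in>U - set cs. s (q' k) k) = (-1)^card (U - set cs)"
    proof (rule less.hyps[OF card_lt])
      show "U - set cs \<subseteq> {..<n}" using less.prems(1) by blast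
      show "q' permutes U - set cs" by (rule q'p)
      show "\<forall>k\<in>U - set cs. s (q' k) k \<noteq> 0" using less.prems(3) by (simp add: q'_def)
      show "\<forall>C. is_feedback_loop n s C \<and> set C \<subseteq> U - set cs \<longrightarrow> cycle_sign s C \<noteq> 1"
        using less.prems(4) by blast
    qed
    have permq': "permutation q'" using q'p finU permutation_permutes by blast
    have sq: "sign q = (-1)^(length cs - 1) * sign q'"
      using sign_compose[OF permutation_of_cycle permq', of cs] qd sign_cycle[OF sp'(1)] by simp
    have pr: "(\<Prod>k\<in>U. s (q k) k) = (\<Prod>k\<in>U - set cs. s (q k) k) * (\<Prod>k\<in>set cs. s (q k) k)"
      by (rule prod.subset_diff[OF csU finU])
    have pr2: "(\<Prod>k\<in>U - set cs. s (q k) k) = (\<Prod>k\<in>U - set cs. s (q' k) k)"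
      by (rule prod.cong) (auto simp: q'_def)
    have pr3: "(\<Prod>k\<in>set cs. s (q k) k) = cycle_sign s cs" by (rule prod_cyc[OF sp'(1) sp'(4)])
    have inU: "q k \<in> U" if "k \<in> U" for k using permutes_in_image[OF less.prems(2)] that by auto
    have pm: "cycle_sign s cs \<in> {-1, 1}"
    proof -
      have "(\<Prod>k\<in>set cs. s (q k) k) \<in> {-1, 1}"
      proof (rule prod_pm1)
        show "\<forall>x\<in>set cs. s (q x) x \<in> {- 1, 1}"
        proof
          fix x assume x: "x \<in> set cs"
          then have "x \<in> U" "q x \<in> U" using csU inU by auto
          then have "s (q x) x \<in> {-1, 0, 1}" using sp less.prems(1) unfolding sign_pattern_def by auto
          moreover have "s (q x) x \<noteq> 0" using less.prems(3) \<open>x \<in> U\<close> by auto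
          ultimately show "s (q x) x \<in> {- 1, 1}" by auto
        qed
      qed simp
      then show ?thesis using pr3 by simp
    qed
    have cm1: "cycle_sign s cs = -1"
    proof (cases "length cs = 1")
      case True
      then have "cs = [a]" using sp'(2,3) by (cases cs) auto
      moreover have "a < n" using a less.prems(1) by auto
      ultimately show ?thesis using nd unfolding cycle_sign_def neg_diag_def by simp
    next
      case False
      have "length cs > 0" using sp'(2) by simp
      with False have len2: "length cs \<ge> 2" by linarith
      have "is_feedback_loop n s cs"
        unfolding is_feedback_loop_def
      proof (intro conjI allI impI)
        show "2 \<le> length cs" by (rule len2)
        show "distinct cs" by (rule sp'(1))
        show "set cs \<subseteq> {..<n}" using csU less.prems(1) by auto
        fix t assume t: "t < length cs"
        have "cs!t \<in> U" using t csU by auto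
        then have "s (q (cs!t)) (cs!t) \<noteq> 0" using less.prems(3) by auto
        then show "edge s (cs ! t) (cs ! (Suc t mod length cs))"
          unfolding edge_def using sp'(4) t by simp
      qed
      then have "cycle_sign s cs \<noteq> 1" using less.prems(4) csU by blast
      then show ?thesis using pm by auto
    qed
    have cardU: "card U = card (U - set cs) + length cs"
      using card_Diff_subset[OF _ csU] distinct_card[OF sp'(1)] card_mono[OF finU csU] finU
      by (metis finite_subset csU le_add_diff_inverse2)
    obtain m where m: "length cs = Suc m" using sp'(2) by (cases cs) auto
    have "sign q * (\<Prod>k\<in>U. s (q k) k) = (-1)^m * (sign q' * (\<Prod>k\<in>U - set cs. s (q' k) k)) * (-1)"
      using sq pr pr2 pr3 cm1 m by (simp add: mult_ac)
    also have "\<dots> = (-1)^(Suc m + card (U - set cs))" using IH by (simp add: power_add mult_ac)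
    finally show ?thesis using cardU m by (simp add: add.commute)
  qed
qed



lemma path_of_perm:
  fixes s :: "nat \<Rightarrow> nat \<Rightarrow> int" and p :: "nat \<Rightarrow> nat"
  assumes "i < n" "j < n" "p permutes {0..<n}" "p j = i" "\<forall>k\<in>{0..<n}-{j}. s (p k) k \<noteq> 0"
  defines "P \<equiv> support p i"
  defines "q \<equiv> (\<lambda>y. if y \<in> {0..<n} - set P then p y else y)"
  shows "is_path_from n s i j P" "q permutes ({0..<n} - set P)" "p = cycle_of_list P \<circ> q"
        "\<forall>k\<in>{0..<n} - set P. s (q k) k \<noteq> 0"
proof -
  have fin: "finite {0..<n}" by simp
  have iV: "i \<in> {0..<n}" using assms by simp
  have perm: "permutation p" using assms(3) fin permutation_permutes by blast
  show "q permutes ({0..<n} - set P)" "p = cycle_of_list P \<circ> q"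
    using decomp[OF assms(3) fin iV] unfolding P_def q_def by auto
  note sp' = support_props[OF perm, of i, folded P_def]
  have PV: "set P \<subseteq> {0..<n}" unfolding P_def by (rule support_subset[OF assms(3) iV])
  define L where "L = length P"
  have L0: "L > 0" using sp'(2) unfolding L_def by simp
  have "p (P!(L-1)) = P!(Suc (L-1) mod L)" using sp'(4) L0 unfolding L_def by simp
  also have "\<dots> = P!0" using L0 by simp
  also have "\<dots> = i" using sp'(2,3) by (simp add: hd_conv_nth)
  finally have "p (P!(L-1)) = p j" using assms(4) by simp
  then have PL: "P!(L-1) = j" using permutes_inj[OF assms(3)] by (meson injD)
  have lastP: "last P = j" using PL sp'(2) unfolding L_def by (simp add: last_conv_nth)
  have jP: "j \<in> set P" using lastP sp'(2) by auto
  show "is_path_from n s i j P"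
    unfolding is_path_from_def
  proof (intro conjI allI impI)
    show "P \<noteq> []" "hd P = i" "last P = j" "distinct P" by (fact sp'(2) sp'(3) lastP sp'(1))+
    show "set P \<subseteq> {..<n}" using PV by auto
    fix t assume t: "Suc t < length P"
    have "P!t \<noteq> P!(L-1)" using t sp'(1) unfolding L_def by (simp add: nth_eq_iff_index_eq)
    then have "P!t \<noteq> j" using PL by simp
    moreover have "P!t \<in> {0..<n}" using PV t by (meson Suc_lessD nth_mem subsetD)
    ultimately have "s (p (P!t)) (P!t) \<noteq> 0" using assms(5) by auto
    moreover have "p (P!t) = P!(Suc t)" using sp'(4) t by simp
    ultimately show "edge s (P ! t) (P ! Suc t)" unfolding edge_def by simp
  qed
  show "\<forall>k\<in>{0..<n} - set P. s (q k) k \<noteq> 0"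
    using assms(5) jP by (auto simp: q_def)
qed

lemma coef_decomp:
  fixes s :: "nat \<Rightarrow> nat \<Rightarrow> int" and p q :: "nat \<Rightarrow> nat"
  assumes P: "is_path_from n s i j P" and q: "q permutes ({0..<n} - set P)" and pd: "p = cycle_of_list P \<circ> q"
  shows "p permutes {0..<n}" "p j = i"
    "cf n s j p = (-1)^(length P - 1) * path_sign s P * (sign q * (\<Prod>k\<in>{0..<n} - set P. s (q k) k))"
proof -
  have ne: "P \<noteq> []" and hd: "hd P = i" and la: "last P = j" and di: "distinct P" and PV: "set P \<subseteq> {0..<n}"
    using P unfolding is_path_from_def by auto
  have cP: "cycle_of_list P permutes {0..<n}" using cycle_permutes[of P] PV permutes_subset by blast
  have qV: "q permutes {0..<n}" using q permutes_subset by blast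
  show pV: "p permutes {0..<n}" unfolding pd by (rule permutes_compose[OF qV cP])
  have jP: "j \<in> set P" using la ne by auto
  have qj: "q j = j" using permutes_not_in[OF q] jP by auto
  define L where "L = length P"
  have L0: "L > 0" using ne unfolding L_def by simp
  have jL: "j = P!(L-1)" using la ne unfolding L_def by (simp add: last_conv_nth)
  have "cycle_of_list P j = P!(Suc (L-1) mod L)" using cyc_nth[OF di, of "L-1"] jL L0 unfolding L_def by simp
  also have "\<dots> = i" using L0 hd ne by (simp add: hd_conv_nth)
  finally show pj: "p j = i" using pd qj by simp
  have permq: "permutation q" using q permutation_permutes by blast
  have sp: "sign p = (-1)^(L-1) * sign q"
    using sign_compose[OF permutation_of_cycle permq, of P] pd sign_cycle[OF di] unfolding L_def by simp
  have split: "{0..<n} - {j} = (set P - {j}) \<union> ({0..<n} - set P)" using PV jP by auto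
  have "(\<Prod>k\<in>{0..<n} - {j}. s (p k) k) = (\<Prod>k\<in>set P - {j}. s (p k) k) * (\<Prod>k\<in>{0..<n} - set P. s (p k) k)"
    unfolding split by (rule prod.union_disjoint) auto
  also have "(\<Prod>k\<in>set P - {j}. s (p k) k) = (\<Prod>k\<in>set P - {last P}. s (cycle_of_list P k) k)"
    using la permutes_not_in[OF q] by (intro prod.cong) (auto simp: pd)
  also have "\<dots> = path_sign s P"
  proof (rule prod_path[OF di ne], intro allI impI)
    fix t assume "Suc t < length P"
    then show "cycle_of_list P (P!t) = P!(Suc t)" using cyc_nth[OF di, of t] by simp
  qed
  also have "(\<Prod>k\<in>{0..<n} - set P. s (p k) k) = (\<Prod>k\<in>{0..<n} - set P. s (q k) k)"
  proof (rule prod.cong[OF refl])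
    fix k assume "k \<in> {0..<n} - set P"
    then have "q k \<in> {0..<n} - set P" using permutes_in_image[OF q] by auto
    then show "s (p k) k = s (q k) k" using id_outside_supp[of "q k" P] by (simp add: pd)
  qed
  finally show "cf n s j p = (-1)^(length P - 1) * path_sign s P * (sign q * (\<Prod>k\<in>{0..<n} - set P. s (q k) k))"
    unfolding cf_def sp L_def by (simp add: mult_ac)
qed

lemma path_card:
  assumes "is_path_from n s i j P"
  shows "card ({0..<n} - set P) = n - length P" "1 \<le> length P" "length P \<le> n"
proof -
  have ne: "P \<noteq> []" and di: "distinct P" and PV: "set P \<subseteq> {0..<n}"
    using assms unfolding is_path_from_def by auto
  show "card ({0..<n} - set P) = n - length P"
    using card_Diff_subset[OF _ PV] distinct_card[OF di] by (simp add: finite_subset)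
  show "1 \<le> length P" using ne by (cases P) auto
  show "length P \<le> n" using card_mono[OF _ PV] distinct_card[OF di] by simp
qed

lemma exp_arith: "1 \<le> L \<Longrightarrow> L \<le> n \<Longrightarrow> (-1::int)^(L-1) * (-1)^(n-L) = (-1)^(n-1)"
proof -
  assume "1 \<le> L" "L \<le> n"
  then have "(L-1) + (n-L) = n-1" by arith
  then show ?thesis by (metis power_add)
qed

lemma path_sign_pm1:
  assumes sp: "sign_pattern n s" and P: "is_path_from n s i j P"
  shows "path_sign s P \<in> {-1, 1}"
  unfolding path_sign_def
proof (rule prod_pm1, simp, intro ballI)
  fix t assume "t \<in> {..<length P - 1}"
  then have t: "Suc t < length P" by auto
  have "edge s (P!t) (P!Suc t)" using P t unfolding is_path_from_def by auto
  then have nz: "s (P!Suc t) (P!t) \<noteq> 0" unfolding edge_def .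
  have "P!t \<in> set P" "P!Suc t \<in> set P" using t by auto
  then have "P!t < n" "P!Suc t < n" using P unfolding is_path_from_def by auto
  then have "s (P!Suc t) (P!t) \<in> {-1,0,1}" using sp unfolding sign_pattern_def by auto
  then show "s (P!Suc t) (P!t) \<in> {-1,1}" using nz by auto
qed

lemma cf_path:
  fixes s :: "nat \<Rightarrow> nat \<Rightarrow> int"
  assumes nd: "neg_diag n s" and P: "is_path_from n s i j P"
  shows "\<exists>p. p permutes {0..<n} \<and> p j = i \<and> cf n s j p = (-1)^(n-1) * path_sign s P"
proof -
  have idp: "id permutes ({0..<n} - set P)" by (rule permutes_id)
  note cd = coef_decomp[OF P idp refl]
  have "(\<Prod>k\<in>{0..<n} - set P. s (id k) k) = (\<Prod>k\<in>{0..<n} - set P. -1)"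
    using nd unfolding neg_diag_def by (intro prod.cong) auto
  also have "\<dots> = (-1)^(n - length P)" using path_card(1)[OF P] by simp
  finally have "cf n s j (cycle_of_list P \<circ> id) = (-1)^(length P - 1) * (-1)^(n - length P) * path_sign s P"
    using cd(3) by (simp add: mult_ac)
  also have "\<dots> = (-1)^(n-1) * path_sign s P"
    using exp_arith[OF path_card(2,3)[OF P]] by simp
  finally show ?thesis using cd(1,2) by blast
qed

lemma cf_path_loop:
  fixes s :: "nat \<Rightarrow> nat \<Rightarrow> int"
  assumes nd: "neg_diag n s" and P: "is_path_from n s i j P" and C: "is_feedback_loop n s C"
    and disj: "set C \<inter> set P = {}"
  shows "\<exists>p. p permutes {0..<n} \<and> p j = i \<and> cf n s j p = - ((-1)^(n-1) * path_sign s P * cycle_sign s C)"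
proof -
  have C2: "length C \<ge> 2" and dC: "distinct C" and CV: "set C \<subseteq> {..<n}"
    using C unfolding is_feedback_loop_def by auto
  have PV: "set P \<subseteq> {0..<n}" and dP: "distinct P" using P unfolding is_path_from_def by auto
  have CU: "set C \<subseteq> {0..<n} - set P" using CV disj by auto
  have qp: "cycle_of_list C permutes ({0..<n} - set P)"
    using cycle_permutes[of C] CU permutes_subset by blast
  note cd = coef_decomp[OF P qp refl]
  have fin: "finite ({0..<n} - set P)" by simp
  have "(\<Prod>k\<in>{0..<n} - set P. s (cycle_of_list C k) k)
      = (\<Prod>k\<in>({0..<n} - set P) - set C. s (cycle_of_list C k) k) * (\<Prod>k\<in>set C. s (cycle_of_list C k) k)"
    by (rule prod.subset_diff[OF CU fin])
  also have "(\<Prod>k\<in>set C. s (cycle_of_list C k) k) = cycle_sign s C"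
    by (rule prod_cyc[OF dC]) (simp add: cyc_nth[OF dC])
  also have "(\<Prod>k\<in>({0..<n} - set P) - set C. s (cycle_of_list C k) k) = (\<Prod>k\<in>({0..<n} - set P) - set C. -1)"
    using nd id_outside_supp[of _ C] unfolding neg_diag_def by (intro prod.cong) auto
  also have "\<dots> = (-1)^(n - length P - length C)"
  proof -
    have "card (({0..<n} - set P) - set C) = card ({0..<n} - set P) - card (set C)"
      using card_Diff_subset[OF _ CU] by (simp add: finite_subset)
    then show ?thesis using path_card(1)[OF P] distinct_card[OF dC] by simp
  qed
  finally have pr: "(\<Prod>k\<in>{0..<n} - set P. s (cycle_of_list C k) k) = (-1)^(n - length P - length C) * cycle_sign s C" .
  have LL: "length P + length C \<le> n"
  proof -
    have "card (set P \<union> set C) = length P + length C"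
      using disj distinct_card[OF dP] distinct_card[OF dC] by (simp add: card_Un_disjoint inf_commute)
    moreover have "set C \<subseteq> {0..<n}" using CV by auto
    then have "card (set P \<union> set C) \<le> n" using card_mono[of "{0..<n}" "set P \<union> set C"] PV by auto
    ultimately show ?thesis by simp
  qed
  have L1: "1 \<le> length P" by (rule path_card(2)[OF P])
  have e: "(length P - 1) + (length C - 1) + (n - length P - length C) + 1 = n - 1" using LL L1 C2 by arith
  have ee: "(-1::int)^(length P - 1) * (-1)^(length C - 1) * (-1)^(n - length P - length C) = - ((-1)^(n-1))"
  proof -
    have "(-1::int)^(n-1) = (-1)^(length P - 1) * (-1)^(length C - 1) * (-1)^(n - length P - length C) * (-1)"
      by (metis e power_add power_one_right)
    then show ?thesis by simp
  qed
  have "cf n s j (cycle_of_list P \<circ> cycle_of_list C) =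
     ((-1::int)^(length P - 1) * (-1)^(length C - 1) * (-1)^(n - length P - length C)) * path_sign s P * cycle_sign s C"
    using cd(3) pr sign_cycle[OF dC] by (simp add: mult_ac)
  also have "\<dots> = - ((-1)^(n-1) * path_sign s P * cycle_sign s C)" using ee by simp
  finally show ?thesis using cd(1,2) by blast
qed

lemma cf_nz:
  assumes "cf n s j p \<noteq> 0"
  shows "\<forall>k\<in>{0..<n}-{j}. s (p k) k \<noteq> 0"
  using assms unfolding cf_def by auto

lemma cf_main:
  fixes s :: "nat \<Rightarrow> nat \<Rightarrow> int"
  assumes sp: "sign_pattern n s" and nd: "neg_diag n s" and ij: "i < n" "j < n"
    and p: "p permutes {0..<n}" "p j = i" and nz: "cf n s j p \<noteq> 0"
    and noloop: "\<not> (\<exists>C P. is_feedback_loop n s C \<and> cycle_sign s C = 1 \<and> is_path_from n s i j P \<and> set C \<inter> set P = {})"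
  shows "\<exists>P. is_path_from n s i j P \<and> cf n s j p = (-1)^(n-1) * path_sign s P"
proof -
  note pp = path_of_perm[of i n j p s, OF ij p cf_nz[OF nz]]
  define P where "P = support p i"
  define q where "q = (\<lambda>y. if y \<in> {0..<n} - set P then p y else y)"
  have P: "is_path_from n s i j P" and q: "q permutes ({0..<n} - set P)" and pd: "p = cycle_of_list P \<circ> q"
    and qnz: "\<forall>k\<in>{0..<n} - set P. s (q k) k \<noteq> 0"
    using pp unfolding P_def q_def by auto
  have "sign q * (\<Prod>k\<in>{0..<n} - set P. s (q k) k) = (-1)^(card ({0..<n} - set P))"
  proof (rule W[OF sp nd])
    show "{0..<n} - set P \<subseteq> {..<n}" by auto
    show "q permutes {0..<n} - set P" by (rule q)
    show "\<forall>k\<in>{0..<n} - set P. s (q k) k \<noteq> 0" by (rule qnz)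
    show "\<forall>C. is_feedback_loop n s C \<and> set C \<subseteq> {0..<n} - set P \<longrightarrow> cycle_sign s C \<noteq> 1"
      using noloop P by blast
  qed
  then have "cf n s j p = (-1)^(length P - 1) * (-1)^(n - length P) * path_sign s P"
    using coef_decomp(3)[OF P q pd] path_card(1)[OF P] by (simp add: mult_ac)
  also have "\<dots> = (-1)^(n-1) * path_sign s P"
    using exp_arith[OF path_card(2,3)[OF P]] by simp
  finally show ?thesis using P by blast
qed



theorem lemma2:
  fixes n i j :: nat and s :: "nat \<Rightarrow> nat \<Rightarrow> int"
  assumes "sign_pattern n s" and "neg_diag n s"
    and "i < n" and "j < n" and "i \<noteq> j"
  shows "(det (mat_delete (sym_mat n s) i j) = 0 \<longleftrightarrow> \<not> (\<exists>P. is_path_from n s i j P))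
       \<and> ((\<exists>P. is_path_from n s i j P) \<longrightarrow>
          (mixed_signs (det (mat_delete (sym_mat n s) i j)) \<longleftrightarrow>
             incoherent_ffl n s i j \<or>
             (\<exists>C P. is_feedback_loop n s C \<and> cycle_sign s C = 1 \<and> is_path_from n s i j P
                    \<and> set C \<inter> set P = {})))"
proof -
  note sp = assms(1) and nd = assms(2)
  define S where "S = {p. p permutes {0..<n} \<and> p j = i}"
  define Q where "Q = (\<Sum>p\<in>S. Poly_Mapping.single (mnm n j p) (cf n s j p))"
  have D: "det (mat_delete (sym_mat n s) i j) = (-1)^(i+j) * Q"
    using det_B[OF assms(3,4), of s] unfolding Q_def S_def by simp
  have z: "det (mat_delete (sym_mat n s) i j) = 0 \<longleftrightarrow> (\<forall>p\<in>S. cf n s j p = 0)"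
    using D neg_pow_Q[of "i+j" Q] Q_char(1)[OF S_def, of s] unfolding Q_def by simp
  have m: "mixed_signs (det (mat_delete (sym_mat n s) i j)) \<longleftrightarrow>
      (\<exists>p\<in>S. cf n s j p > 0) \<and> (\<exists>p\<in>S. cf n s j p < 0)"
    using D neg_pow_Q[of "i+j" Q] Q_char(2)[OF S_def, of s] unfolding Q_def by simp
  define c0 where "c0 = (-1::int)^(n-1)"
  have c0: "c0 \<in> {-1, 1}" unfolding c0_def by (cases "even (n-1)") auto
  have part1: "(\<forall>p\<in>S. cf n s j p = 0) \<longleftrightarrow> \<not> (\<exists>P. is_path_from n s i j P)"
  proof
    assume all0: "\<forall>p\<in>S. cf n s j p = 0"
    show "\<not> (\<exists>P. is_path_from n s i j P)"
    proof
      assume "\<exists>P. is_path_from n s i j P"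
      then obtain P where P: "is_path_from n s i j P" by blast
      obtain p where "p permutes {0..<n}" "p j = i" "cf n s j p = c0 * path_sign s P"
        using cf_path[OF nd P] unfolding c0_def by blast
      moreover have "path_sign s P \<in> {-1,1}" by (rule path_sign_pm1[OF sp P])
      ultimately show False using all0 c0 unfolding S_def by auto
    qed
  next
    assume np: "\<not> (\<exists>P. is_path_from n s i j P)"
    show "\<forall>p\<in>S. cf n s j p = 0"
    proof (rule ccontr)
      assume "\<not> (\<forall>p\<in>S. cf n s j p = 0)"
      then obtain p where p: "p permutes {0..<n}" "p j = i" "cf n s j p \<noteq> 0" unfolding S_def by auto
      have "is_path_from n s i j (support p i)"
        by (rule path_of_perm(1)[of i n j p s, OF assms(3,4) p(1,2) cf_nz[OF p(3)]])
      then show False using np by blast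
    qed
  qed
  have part2: "mixed_signs (det (mat_delete (sym_mat n s) i j)) \<longleftrightarrow>
             incoherent_ffl n s i j \<or>
             (\<exists>C P. is_feedback_loop n s C \<and> cycle_sign s C = 1 \<and> is_path_from n s i j P
                    \<and> set C \<inter> set P = {})"
  proof
    assume mx: "mixed_signs (det (mat_delete (sym_mat n s) i j))"
    show "incoherent_ffl n s i j \<or>
             (\<exists>C P. is_feedback_loop n s C \<and> cycle_sign s C = 1 \<and> is_path_from n s i j P
                    \<and> set C \<inter> set P = {})"
    proof (rule ccontr)
      assume neg: "\<not> ?thesis"
      then have noffl: "\<not> incoherent_ffl n s i j"
        and noloop: "\<not> (\<exists>C P. is_feedback_loop n s C \<and> cycle_sign s C = 1 \<and> is_path_from n s i j P
                    \<and> set C \<inter> set P = {})" by auto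
      obtain p1 p2 where p1: "p1 \<in> S" "cf n s j p1 > 0" and p2: "p2 \<in> S" "cf n s j p2 < 0"
        using mx m by auto
      obtain P1 where P1: "is_path_from n s i j P1" "cf n s j p1 = c0 * path_sign s P1"
        using cf_main[OF sp nd assms(3,4) _ _ _ noloop, of p1] p1 unfolding S_def c0_def by auto
      obtain P2 where P2: "is_path_from n s i j P2" "cf n s j p2 = c0 * path_sign s P2"
        using cf_main[OF sp nd assms(3,4) _ _ _ noloop, of p2] p2 unfolding S_def c0_def by auto
      have s1: "path_sign s P1 \<in> {-1,1}" by (rule path_sign_pm1[OF sp P1(1)])
      have s2: "path_sign s P2 \<in> {-1,1}" by (rule path_sign_pm1[OF sp P2(1)])
      have opp: "path_sign s P1 = - path_sign s P2" using s1 s2 c0 P1(2) P2(2) p1(2) p2(2) by auto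
      then have "P1 \<noteq> P2" using s1 by auto
      then have "incoherent_ffl n s i j" unfolding incoherent_ffl_def using P1(1) P2(1) opp by blast
      then show False using noffl by blast
    qed
  next
    assume "incoherent_ffl n s i j \<or>
             (\<exists>C P. is_feedback_loop n s C \<and> cycle_sign s C = 1 \<and> is_path_from n s i j P
                    \<and> set C \<inter> set P = {})"
    then have "\<exists>p1\<in>S. \<exists>p2\<in>S. cf n s j p1 \<noteq> 0 \<and> cf n s j p2 = - cf n s j p1"
    proof
      assume "incoherent_ffl n s i j"
      then obtain P1 P2 where P: "is_path_from n s i j P1" "is_path_from n s i j P2"
        "path_sign s P1 = - path_sign s P2" unfolding incoherent_ffl_def by blast
      obtain p1 where p1: "p1 permutes {0..<n}" "p1 j = i" "cf n s j p1 = c0 * path_sign s P1"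
        using cf_path[OF nd P(1)] unfolding c0_def by blast
      obtain p2 where p2: "p2 permutes {0..<n}" "p2 j = i" "cf n s j p2 = c0 * path_sign s P2"
        using cf_path[OF nd P(2)] unfolding c0_def by blast
      have "path_sign s P1 \<in> {-1,1}" by (rule path_sign_pm1[OF sp P(1)])
      then show ?thesis using p1 p2 P(3) c0 unfolding S_def by (intro bexI[of _ p1] bexI[of _ p2]) auto
    next
      assume "\<exists>C P. is_feedback_loop n s C \<and> cycle_sign s C = 1 \<and> is_path_from n s i j P
                    \<and> set C \<inter> set P = {}"
      then obtain C P where C: "is_feedback_loop n s C" "cycle_sign s C = 1" and P: "is_path_from n s i j P"
        and dj: "set C \<inter> set P = {}" by blast
      obtain p1 where p1: "p1 permutes {0..<n}" "p1 j = i" "cf n s j p1 = c0 * path_sign s P"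
        using cf_path[OF nd P] unfolding c0_def by blast
      obtain p2 where p2: "p2 permutes {0..<n}" "p2 j = i" "cf n s j p2 = - (c0 * path_sign s P * cycle_sign s C)"
        using cf_path_loop[OF nd P C(1) dj] unfolding c0_def by blast
      have "path_sign s P \<in> {-1,1}" by (rule path_sign_pm1[OF sp P])
      then show ?thesis using p1 p2 C(2) c0 unfolding S_def by (intro bexI[of _ p1] bexI[of _ p2]) auto
    qed
    then obtain p1 p2 where q1: "p1 \<in> S" "p2 \<in> S" "cf n s j p1 \<noteq> 0" "cf n s j p2 = - cf n s j p1" by blast
    have "cf n s j p1 > 0 \<or> cf n s j p1 < 0" using q1(3) by auto
    then have "(\<exists>p\<in>S. cf n s j p > 0) \<and> (\<exists>p\<in>S. cf n s j p < 0)"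
    proof
      assume "cf n s j p1 > 0"
      then have "cf n s j p2 < 0" using q1(4) by simp
      then show ?thesis using \<open>cf n s j p1 > 0\<close> q1(1,2) by blast
    next
      assume "cf n s j p1 < 0"
      then have "cf n s j p2 > 0" using q1(4) by simp
      then show ?thesis using \<open>cf n s j p1 < 0\<close> q1(1,2) by blast
    qed
    then show "mixed_signs (det (mat_delete (sym_mat n s) i j))" using m by simp
  qed
  show ?thesis using z part1 part2 by blast
qed

end
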